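(* Let $H\in\mathcal{H}$. Then: \begin{enumerate} \item $H_{reg}$ is an anti-symmetric convex-concave function on $\mathbb{R}^N\times\mathbb{R}^N$ whose restriction to $\bar\Omega\times\bar\Omega$ belongs to $\mathcal{H}$. \item $L_{H_{reg}}$ is convex and continuous in both variables, and $L_{H_{reg}}\le L_H$ on $\bar\Omega\times B_R$. \item $|L_{H_{reg}}(x,p)|\le R\|x\|+R\|p\|+5R^2$ and $|H_{reg}(x,y)|\le R\|x\|+R\|y\|+4R^2$ for all $x,y,p\in\mathbb{R}^N$. \item $L_{H_{reg}}$ and $H_{reg}$ are Lipschitz continuous with Lipschitz constants at most $4NR$. \end{enumerate}
   Context: $\Omega\subset\mathbb{R}^N$ is a bounded domain with $\bar\Omega\subset B_R$, where $B_R$ is the ball of radius $R>0$ centered at the origin. $\mathcal{H}$ is the set of continuous $H$ on $\bar\Omega\times\bar\Omega$ with $H(x,y)=-H(y,x)$. For a continuous $H$ on $\bar\Omega\times\bar\Omega$ define, for $x,p\in\mathbb{R}^N$, $L_H(x,p)=\sup_{y\in\bar\Omega}\{\langle y,p\rangle-H(y,x)\}$ (the same formula defines $L_G$ for any $G$ defined on $\mathbb{R}^N\times\mathbb{R}^N$). Restricted conjugates: $L_H^*(q,y)=\sup_{x\in\bar\Omega,\,p\in B_R}\{\langle y,p\rangle+\langle q,x\rangle-L_H(x,p)\}$ and $L_H^{**}(y,q)=\sup_{x\in\bar\Omega,\,p\in B_R}\{\langle y,p\rangle+\langle q,x\rangle-L_H^*(p,x)\}$ for $y,q\in\mathbb{R}^N$.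 For a function $L$ on $\mathbb{R}^N\times\mathbb{R}^N$, its $B_R$-Hamiltonian is $H_L(x,y)=\sup_{p\in B_R}\{\langle x,p\rangle-L(y,p)\}$. The regularization of $H$ is $H_{reg}(x,y)=\tfrac12\big(H_{L_H^{**}}(x,y)-H_{L_H^{**}}(y,x)\big)$ for $x,y\in\mathbb{R}^N$. *)

theory Defs
  imports "HOL-Analysis.Analysis"
begin

definition classH :: "'a::euclidean_space set \<Rightarrow> ('a \<Rightarrow> 'a \<Rightarrow> real) \<Rightarrow> bool" where
  "classH Om H \<longleftrightarrow>
     continuous_on (closure Om \<times> closure Om) (\<lambda>(x, y). H x y) \<and>
     (\<forall>x\<in>closure Om. \<forall>y\<in>closure Om. H x y = - H y x)"

definition LagL :: "'a::euclidean_space set \<Rightarrow> ('a \<Rightarrow> 'a \<Rightarrow> real) \<Rightarrow> 'a \<Rightarrow> 'a \<Rightarrow> real" where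
  "LagL Om G x p = (SUP y\<in>closure Om. inner y p - G y x)"

definition LagStar :: "'a::euclidean_space set \<Rightarrow> real \<Rightarrow> ('a \<Rightarrow> 'a \<Rightarrow> real) \<Rightarrow> 'a \<Rightarrow> 'a \<Rightarrow> real" where
  "LagStar Om R H q y =
     (SUP xp\<in>closure Om \<times> ball 0 R. inner y (snd xp) + inner q (fst xp) - LagL Om H (fst xp) (snd xp))"

definition LagStarStar :: "'a::euclidean_space set \<Rightarrow> real \<Rightarrow> ('a \<Rightarrow> 'a \<Rightarrow> real) \<Rightarrow> 'a \<Rightarrow> 'a \<Rightarrow> real" where
  "LagStarStar Om R H y q =
     (SUP xp\<in>closure Om \<times> ball 0 R. inner y (snd xp) + inner q (fst xp) - LagStar Om R H (snd xp) (fst xp))"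

definition HamB :: "real \<Rightarrow> ('a::euclidean_space \<Rightarrow> 'a \<Rightarrow> real) \<Rightarrow> 'a \<Rightarrow> 'a \<Rightarrow> real" where
  "HamB R L x y = (SUP p\<in>ball 0 R. inner x p - L y p)"

definition Hreg :: "'a::euclidean_space set \<Rightarrow> real \<Rightarrow> ('a \<Rightarrow> 'a \<Rightarrow> real) \<Rightarrow> 'a \<Rightarrow> 'a \<Rightarrow> real" where
  "Hreg Om R H x y =
     (HamB R (LagStarStar Om R H) x y - HamB R (LagStarStar Om R H) y x) / 2"

end

theory Submission
  imports Defs
begin

lemma inner_bound: fixes y p :: "'a::real_inner"
  assumes "norm y \<le> R" shows "\<bar>inner y p\<bar> \<le> R * norm p"
proof -
  have "\<bar>inner y p\<bar> \<le> norm y * norm p" by (rule Cauchy_Schwarz_ineq2)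
  also have "\<dots> \<le> R * norm p" using assms by (simp add: mult_right_mono)
  finally show ?thesis .
qed

lemma inner_bound': fixes y p :: "'a::real_inner"
  assumes "norm y \<le> R" shows "\<bar>inner p y\<bar> \<le> R * norm p"
  using inner_bound[OF assms, of p] by (simp add: inner_commute)

lemma sup_scale:
  fixes f :: "'b \<Rightarrow> real"
  assumes "u > 0" "A \<noteq> {}" "\<And>a. a \<in> A \<Longrightarrow> u * f a \<le> W"
  shows "u * Sup (f ` A) \<le> W"
proof -
  have "Sup (f ` A) \<le> W / u"
    using assms by (intro cSUP_least) (auto simp: field_simps mult.commute)
  thus ?thesis using assms(1) by (simp add: field_simps mult.commute)
qed

locale reg =
  fixes Om :: "'a::euclidean_space set" and R :: real and H :: "'a \<Rightarrow> 'a \<Rightarrow> real" and M :: real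
  assumes Rpos: "R > 0" and Kne: "closure Om \<noteq> {}" and KB: "closure Om \<subseteq> ball 0 R"
    and cH: "classH Om H" and Mb: "\<And>x y. x \<in> closure Om \<Longrightarrow> y \<in> closure Om \<Longrightarrow> \<bar>H x y\<bar> \<le> M"
begin

abbreviation "K \<equiv> closure Om"
abbreviation "B \<equiv> ball (0::'a) R"
abbreviation "L \<equiv> LagL Om H"
abbreviation "Ls \<equiv> LagStar Om R H"
abbreviation "Lss \<equiv> LagStarStar Om R H"
abbreviation "HL \<equiv> HamB R Lss"
abbreviation "Hr \<equiv> Hreg Om R H"
abbreviation "LR \<equiv> LagL Om Hr"

lemma normK: "y \<in> K \<Longrightarrow> norm y \<le> R" using KB by (auto simp: subset_iff dist_norm)
lemma normB: "p \<in> B \<Longrightarrow> norm p \<le> R" by (simp add: dist_norm)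
lemma B0: "0 \<in> B" using Rpos by simp
lemma Kex: obtains x0 where "x0 \<in> K"
proof -
  have "\<exists>x. x \<in> K" using Kne ex_in_conv by metis
  then show ?thesis using that by blast
qed
lemma KBne: "K \<times> B \<noteq> {}" using Kne B0 by auto
lemma RR: "p \<in> B \<Longrightarrow> R * norm p \<le> R * R" using Rpos normB by (simp add: mult_left_mono)

lemma Hanti: "x\<in>K \<Longrightarrow> y\<in>K \<Longrightarrow> H x y = - H y x" using cH unfolding classH_def by blast
lemma Hdiag: "x\<in>K \<Longrightarrow> H x x = 0" using Hanti[of x x] by simp

lemma L_bdd: "bdd_above ((\<lambda>y. inner y p - H y x) ` K)" if "x \<in> K"
proof (rule bdd_aboveI[of _ "R * norm p + M"])
  fix t assume "t \<in> (\<lambda>y. inner y p - H y x) ` K"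
  then obtain y where y: "y \<in> K" "t = inner y p - H y x" by auto
  show "t \<le> R * norm p + M" using inner_bound[OF normK[OF y(1)], of p] Mb[OF y(1) that] y by linarith
qed

lemma L_ge: "x\<in>K \<Longrightarrow> y\<in>K \<Longrightarrow> inner y p - H y x \<le> L x p"
  unfolding LagL_def by (rule cSUP_upper) (auto intro: L_bdd)

lemma L_le: "x\<in>K \<Longrightarrow> L x p \<le> R * norm p + M"
  unfolding LagL_def
proof (rule cSUP_least[OF Kne])
  fix y assume "x \<in> K" "y \<in> K"
  thus "inner y p - H y x \<le> R * norm p + M" using inner_bound[OF normK, of y p] Mb[of y x] by force
qed

lemma L_lower: "x\<in>K \<Longrightarrow> inner x p \<le> L x p" using L_ge[of x x p] Hdiag by simp

lemma Ls_bdd: "bdd_above ((\<lambda>xp. inner y (snd xp) + inner q (fst xp) - L (fst xp) (snd xp)) ` (K \<times> B))"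
proof (rule bdd_aboveI[of _ "R * norm y + R * norm q + R * R"])
  fix t assume "t \<in> (\<lambda>xp. inner y (snd xp) + inner q (fst xp) - L (fst xp) (snd xp)) ` (K \<times> B)"
  then obtain x p where xp: "x \<in> K" "p \<in> B" "t = inner y p + inner q x - L x p" by auto
  have "inner x p \<le> L x p" by (rule L_lower[OF xp(1)])
  moreover have "inner y p \<le> R * norm y" using inner_bound'[OF normB[OF xp(2)]] abs_le_D1 by blast
  moreover have "inner q x \<le> R * norm q" using inner_bound'[OF normK[OF xp(1)]] abs_le_D1 by blast
  moreover have "- inner x p \<le> R * R" using inner_bound[OF normK[OF xp(1)], of p] RR[OF xp(2)] abs_le_D2 by fastforce
  ultimately show "t \<le> R * norm y + R * norm q + R * R" unfolding xp(3) by linarith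
qed

lemma Ls_ge: "x\<in>K \<Longrightarrow> p\<in>B \<Longrightarrow> inner y p + inner q x - L x p \<le> Ls q y"
  unfolding LagStar_def using cSUP_upper[OF _ Ls_bdd, of "(x,p)" y q] by auto

lemma Ls_le_L: assumes "x\<in>K" "p\<in>B" shows "Ls p x \<le> L x p"
  unfolding LagStar_def
proof (rule cSUP_least[OF KBne])
  fix xp assume "xp \<in> K \<times> B"
  then obtain x' p' where xp: "xp = (x',p')" "x' \<in> K" "p' \<in> B" by auto
  have "inner x p' - H x x' \<le> L x' p'" by (rule L_ge[OF xp(2) assms(1)])
  moreover have "inner x' p - H x' x \<le> L x p" by (rule L_ge[OF assms(1) xp(2)])
  moreover have "H x x' = - H x' x" by (rule Hanti[OF assms(1) xp(2)])
  ultimately show "inner x (snd xp) + inner p (fst xp) - L (fst xp) (snd xp) \<le> L x p"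
    using xp by (simp add: inner_commute)
qed

lemma Ls_lower: "- (R * norm q) - M \<le> Ls q y"
proof -
  obtain x0 where x0: "x0 \<in> K" using Kex by blast
  have "inner y 0 + inner q x0 - L x0 0 \<le> Ls q y" using Ls_ge[OF x0 B0] .
  moreover have "L x0 0 \<le> M" using L_le[OF x0, of 0] by simp
  moreover have "\<bar>inner q x0\<bar> \<le> R * norm q" using inner_bound'[OF normK[OF x0]] .
  ultimately show ?thesis by simp
qed

lemma Lss_bdd: "bdd_above ((\<lambda>xp. inner y (snd xp) + inner q (fst xp) - Ls (snd xp) (fst xp)) ` (K \<times> B))"
proof (rule bdd_aboveI[of _ "R * norm y + R * norm q + R * R + M"])
  fix t assume "t \<in> (\<lambda>xp. inner y (snd xp) + inner q (fst xp) - Ls (snd xp) (fst xp)) ` (K \<times> B)"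
  then obtain x p where xp: "x \<in> K" "p \<in> B" "t = inner y p + inner q x - Ls p x" by auto
  have "- (R * norm p) - M \<le> Ls p x" by (rule Ls_lower)
  moreover have "inner y p \<le> R * norm y" using inner_bound'[OF normB[OF xp(2)]] abs_le_D1 by blast
  moreover have "inner q x \<le> R * norm q" using inner_bound'[OF normK[OF xp(1)]] abs_le_D1 by blast
  moreover have "R * norm p \<le> R * R" using RR[OF xp(2)] .
  ultimately show "t \<le> R * norm y + R * norm q + R * R + M" unfolding xp(3) by linarith
qed

lemma Lss_ge: "x\<in>K \<Longrightarrow> p\<in>B \<Longrightarrow> inner y p + inner q x - Ls p x \<le> Lss y q"
  unfolding LagStarStar_def using cSUP_upper[OF _ Lss_bdd, of "(x,p)" y q] by auto

lemma Lss_le_L: assumes "x\<in>K" "p\<in>B" shows "Lss x p \<le> L x p"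
  unfolding LagStarStar_def
proof (rule cSUP_least[OF KBne])
  fix xp assume "xp \<in> K \<times> B"
  then obtain x' p' where xp: "xp = (x',p')" "x' \<in> K" "p' \<in> B" by auto
  have "inner x' p + inner p' x - L x p \<le> Ls p' x'" using Ls_ge assms by blast
  thus "inner x (snd xp) + inner p (fst xp) - Ls (snd xp) (fst xp) \<le> L x p"
    using xp by (simp add: inner_commute)
qed

lemma Lss_lower: "- (R * norm q) - M \<le> Lss y q"
proof -
  obtain x0 where x0: "x0 \<in> K" using Kex by blast
  have "inner y 0 + inner q x0 - Ls 0 x0 \<le> Lss y q" using Lss_ge[OF x0 B0] .
  moreover have "Ls 0 x0 \<le> M" using Ls_le_L[OF x0 B0] L_le[OF x0, of 0] by simp
  moreover have "\<bar>inner q x0\<bar> \<le> R * norm q" using inner_bound'[OF normK[OF x0]] .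
  ultimately show ?thesis by simp
qed

lemma Lss_lip: "Lss y q \<le> Lss y' q + R * norm (y - y')"
  unfolding LagStarStar_def[of _ _ _ y]
proof (rule cSUP_least[OF KBne])
  fix xp assume "xp \<in> K \<times> B"
  then obtain x p where xp: "xp = (x,p)" "x \<in> K" "p \<in> B" by auto
  have "inner y' p + inner q x - Ls p x \<le> Lss y' q" using Lss_ge xp by blast
  moreover have "inner y p = inner y' p + inner (y - y') p" by (simp add: inner_diff_left)
  moreover have "\<bar>inner (y - y') p\<bar> \<le> R * norm (y - y')" using inner_bound'[OF normB[OF xp(3)]] .
  ultimately show "inner y (snd xp) + inner q (fst xp) - Ls (snd xp) (fst xp) \<le> Lss y' q + R * norm (y - y')"
    using xp by simp
qed

lemma Lss_convex_pt: assumes "0 \<le> t" "t \<le> 1"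
  shows "Lss ((1-t) *\<^sub>R y1 + t *\<^sub>R y2) ((1-t) *\<^sub>R q1 + t *\<^sub>R q2) \<le> (1-t) * Lss y1 q1 + t * Lss y2 q2"
  unfolding LagStarStar_def[of _ _ _ "(1-t) *\<^sub>R y1 + t *\<^sub>R y2"]
proof (rule cSUP_least[OF KBne])
  fix xp assume "xp \<in> K \<times> B"
  then obtain x p where xp: "xp = (x,p)" "x \<in> K" "p \<in> B" by auto
  have "inner y1 p + inner q1 x - Ls p x \<le> Lss y1 q1" using Lss_ge xp by blast
  hence a: "(1-t) * (inner y1 p + inner q1 x - Ls p x) \<le> (1-t) * Lss y1 q1"
    using assms by (intro mult_left_mono) auto
  have "inner y2 p + inner q2 x - Ls p x \<le> Lss y2 q2" using Lss_ge xp by blast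
  hence b: "t * (inner y2 p + inner q2 x - Ls p x) \<le> t * Lss y2 q2"
    using assms by (intro mult_left_mono) auto
  have "inner ((1-t) *\<^sub>R y1 + t *\<^sub>R y2) p + inner ((1-t) *\<^sub>R q1 + t *\<^sub>R q2) x - Ls p x
     = (1-t) * (inner y1 p + inner q1 x - Ls p x) + t * (inner y2 p + inner q2 x - Ls p x)"
    by (simp add: inner_add_left algebra_simps)
  thus "inner ((1-t) *\<^sub>R y1 + t *\<^sub>R y2) (snd xp) + inner ((1-t) *\<^sub>R q1 + t *\<^sub>R q2) (fst xp) - Ls (snd xp) (fst xp)
     \<le> (1-t) * Lss y1 q1 + t * Lss y2 q2" using a b xp by simp
qed

lemma HL_bdd: "bdd_above ((\<lambda>p. inner x p - Lss y p) ` B)"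
proof (rule bdd_aboveI[of _ "R * norm x + R * R + M"])
  fix t assume "t \<in> (\<lambda>p. inner x p - Lss y p) ` B"
  then obtain p where p: "p \<in> B" "t = inner x p - Lss y p" by auto
  have "- (R * norm p) - M \<le> Lss y p" by (rule Lss_lower)
  moreover have "\<bar>inner x p\<bar> \<le> R * norm x" using inner_bound'[OF normB[OF p(1)]] .
  moreover have "R * norm p \<le> R * R" using RR[OF p(1)] .
  ultimately show "t \<le> R * norm x + R * R + M" using p by linarith
qed

lemma HL_ge: "p\<in>B \<Longrightarrow> inner x p - Lss y p \<le> HL x y"
  unfolding HamB_def by (rule cSUP_upper[OF _ HL_bdd])

lemma Bne: "B \<noteq> {}" using B0 by blast

lemma HL_lip1: "HL x y \<le> HL x' y + R * norm (x - x')"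
  unfolding HamB_def[of _ _ x]
proof (rule cSUP_least[OF Bne])
  fix p assume p: "p \<in> B"
  have "inner x' p - Lss y p \<le> HL x' y" using HL_ge p by blast
  moreover have "inner x p = inner x' p + inner (x - x') p" by (simp add: inner_diff_left)
  moreover have "\<bar>inner (x - x') p\<bar> \<le> R * norm (x - x')" using inner_bound'[OF normB[OF p]] .
  ultimately show "inner x p - Lss y p \<le> HL x' y + R * norm (x - x')" by simp
qed

lemma HL_lip2: "HL x y \<le> HL x y' + R * norm (y - y')"
  unfolding HamB_def[of _ _ x y]
proof (rule cSUP_least[OF Bne])
  fix p assume p: "p \<in> B"
  have "inner x p - Lss y' p \<le> HL x y'" using HL_ge p by blast
  moreover have "Lss y' p \<le> Lss y p + R * norm (y' - y)" by (rule Lss_lip)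
  moreover have "norm (y' - y) = norm (y - y')" by (rule norm_minus_commute)
  ultimately show "inner x p - Lss y p \<le> HL x y' + R * norm (y - y')" by simp
qed

lemma HL_lip: "\<bar>HL x y - HL x' y'\<bar> \<le> R * norm (x - x') + R * norm (y - y')"
proof (rule abs_leI)
  have a: "HL x y \<le> HL x' y + R * norm (x - x')" by (rule HL_lip1)
  have b: "HL x' y \<le> HL x' y' + R * norm (y - y')" by (rule HL_lip2)
  show "HL x y - HL x' y' \<le> R * norm (x - x') + R * norm (y - y')" using a b by linarith
  have c: "HL x' y' \<le> HL x y' + R * norm (x - x')" using HL_lip1[of x' y' x] by (simp add: norm_minus_commute)
  have d: "HL x y' \<le> HL x y + R * norm (y - y')" using HL_lip2[of x y' y] by (simp add: norm_minus_commute)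
  show "- (HL x y - HL x' y') \<le> R * norm (x - x') + R * norm (y - y')" using c d by linarith
qed

lemma HL_convex: "convex_on UNIV (\<lambda>x. HL x y)"
proof (rule convex_onI)
  fix t x1 x2 assume t: "0 < (t::real)" "t < 1"
  show "HL ((1-t) *\<^sub>R x1 + t *\<^sub>R x2) y \<le> (1-t) * HL x1 y + t * HL x2 y"
    unfolding HamB_def[of _ _ "(1-t) *\<^sub>R x1 + t *\<^sub>R x2"]
  proof (rule cSUP_least[OF Bne])
    fix p assume p: "p \<in> B"
    have a: "(1-t) * (inner x1 p - Lss y p) \<le> (1-t) * HL x1 y"
      using t HL_ge[OF p] by (intro mult_left_mono) auto
    have b: "t * (inner x2 p - Lss y p) \<le> t * HL x2 y"
      using t HL_ge[OF p] by (intro mult_left_mono) auto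
    have "inner ((1-t) *\<^sub>R x1 + t *\<^sub>R x2) p - Lss y p = (1-t) * (inner x1 p - Lss y p) + t * (inner x2 p - Lss y p)"
      by (simp add: inner_add_left algebra_simps)
    thus "inner ((1-t) *\<^sub>R x1 + t *\<^sub>R x2) p - Lss y p \<le> (1-t) * HL x1 y + t * HL x2 y" using a b by simp
  qed
qed simp

lemma HL_concave: "convex_on UNIV (\<lambda>y. - HL x y)"
proof (rule convex_onI)
  fix t and y1 y2 :: 'a assume t: "0 < (t::real)" "t < 1"
  let ?y = "(1-t) *\<^sub>R y1 + t *\<^sub>R y2"
  have key: "(1-t) * (inner x p1 - Lss y1 p1) + t * (inner x p2 - Lss y2 p2) \<le> HL x ?y"
    if p: "p1 \<in> B" "p2 \<in> B" for p1 p2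
  proof -
    let ?p = "(1-t) *\<^sub>R p1 + t *\<^sub>R p2"
    have "?p \<in> B" using convex_ball[of "0::'a" R] p t unfolding convex_def by auto
    hence "inner x ?p - Lss ?y ?p \<le> HL x ?y" by (rule HL_ge)
    moreover have "Lss ?y ?p \<le> (1-t) * Lss y1 p1 + t * Lss y2 p2" using Lss_convex_pt t by auto
    moreover have "inner x ?p = (1-t) * inner x p1 + t * inner x p2" by (simp add: inner_add_right)
    ultimately show ?thesis by (simp add: algebra_simps)
  qed
  have "(1-t) * HL x y1 \<le> HL x ?y - t * HL x y2"
  proof -
    have "t * HL x y2 \<le> HL x ?y - (1-t) * (inner x p1 - Lss y1 p1)" if p1: "p1 \<in> B" for p1
      unfolding HamB_def[of _ _ x y2]
      apply (rule sup_scale[OF t(1) Bne])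
      using key[OF p1] by (simp add: algebra_simps)
    hence "(1-t) * (inner x p1 - Lss y1 p1) \<le> HL x ?y - t * HL x y2" if "p1 \<in> B" for p1
      using that by (simp add: algebra_simps)
    thus ?thesis unfolding HamB_def[of _ _ x y1] using t
      by (intro sup_scale[OF _ Bne]) auto
  qed
  thus "- HL x ?y \<le> (1-t) * - HL x y1 + t * - HL x y2" by simp
qed simp

lemma Hr_def': "Hr x y = (HL x y - HL y x) / 2" by (simp add: Hreg_def)
lemma Hr_anti: "Hr x y = - Hr y x" unfolding Hr_def' by (simp add: divide_simps)
lemma Hr_lip: "\<bar>Hr x y - Hr x' y'\<bar> \<le> R * norm (x - x') + R * norm (y - y')"
proof -
  have a: "\<bar>HL x y - HL x' y'\<bar> \<le> R * norm (x - x') + R * norm (y - y')" by (rule HL_lip)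
  have b: "\<bar>HL y x - HL y' x'\<bar> \<le> R * norm (y - y') + R * norm (x - x')" by (rule HL_lip)
  have "Hr x y - Hr x' y' = ((HL x y - HL x' y') - (HL y x - HL y' x')) / 2" unfolding Hr_def' by (simp add: field_simps)
  moreover have "\<bar>(HL x y - HL x' y') - (HL y x - HL y' x')\<bar> \<le> \<bar>HL x y - HL x' y'\<bar> + \<bar>HL y x - HL y' x'\<bar>" by (rule abs_triangle_ineq4)
  ultimately show ?thesis using a b by simp
qed
lemma Hr_bound: "\<bar>Hr x y\<bar> \<le> R * norm x + R * norm y"
proof -
  have "\<bar>Hr x y - Hr y y\<bar> \<le> R * norm (x - y) + R * norm (y - y)" by (rule Hr_lip)
  moreover have "Hr y y = 0" using Hr_anti[of y y] by simp
  moreover have "R * norm (x - y) \<le> R * (norm x + norm y)"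
    using Rpos norm_triangle_ineq4[of x y] by (intro mult_left_mono) auto
  ultimately show ?thesis by (simp add: algebra_simps)
qed

lemma Hr_convex: "convex_on UNIV (\<lambda>x. Hr x y)"
proof -
  have "(\<lambda>x. Hr x y) = (\<lambda>x. (1/2) * (HL x y + - HL y x))" by (simp add: Hr_def' fun_eq_iff)
  moreover have "convex_on UNIV (\<lambda>x. (1/2) * (HL x y + - HL y x))"
    by (intro convex_on_cmul convex_on_add HL_convex HL_concave) auto
  ultimately show ?thesis by simp
qed

lemma Hr_concave: "concave_on UNIV (\<lambda>y. Hr x y)"
proof -
  have "(\<lambda>y. - Hr x y) = (\<lambda>y. Hr y x)"
  proof
    fix y show "- Hr x y = Hr y x" using Hr_anti[of y x] by simp
  qed
  thus ?thesis unfolding concave_on_def using Hr_convex by simp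
qed

lemma LR_bdd: "bdd_above ((\<lambda>y. inner y p - Hr y x) ` K)"
proof (rule bdd_aboveI[of _ "R * norm p + R * R + R * norm x"])
  fix t assume "t \<in> (\<lambda>y. inner y p - Hr y x) ` K"
  then obtain y where y: "y \<in> K" "t = inner y p - Hr y x" by auto
  have "\<bar>Hr y x\<bar> \<le> R * norm y + R * norm x" by (rule Hr_bound)
  moreover have "R * norm y \<le> R * R" using Rpos normK[OF y(1)] by (simp add: mult_left_mono)
  moreover have "\<bar>inner y p\<bar> \<le> R * norm p" using inner_bound[OF normK[OF y(1)]] .
  ultimately show "t \<le> R * norm p + R * R + R * norm x" using y by linarith
qed

lemma LR_ge: "y\<in>K \<Longrightarrow> inner y p - Hr y x \<le> LR x p"
  unfolding LagL_def by (rule cSUP_upper[OF _ LR_bdd])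

lemma LR_upper: "LR x p \<le> R * norm p + R * R + R * norm x"
  unfolding LagL_def
proof (rule cSUP_least[OF Kne])
  fix y assume y: "y \<in> K"
  have "\<bar>Hr y x\<bar> \<le> R * norm y + R * norm x" by (rule Hr_bound)
  moreover have "R * norm y \<le> R * R" using Rpos normK[OF y] by (simp add: mult_left_mono)
  moreover have "\<bar>inner y p\<bar> \<le> R * norm p" using inner_bound[OF normK[OF y]] .
  ultimately show "inner y p - Hr y x \<le> R * norm p + R * R + R * norm x" by linarith
qed

lemma LR_lower: "- (R * norm p + R * R + R * norm x) \<le> LR x p"
proof -
  obtain y where y: "y \<in> K" using Kex by blast
  have "inner y p - Hr y x \<le> LR x p" using LR_ge[OF y] .
  moreover have "\<bar>Hr y x\<bar> \<le> R * norm y + R * norm x" by (rule Hr_bound)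
  moreover have "R * norm y \<le> R * R" using Rpos normK[OF y] by (simp add: mult_left_mono)
  moreover have "\<bar>inner y p\<bar> \<le> R * norm p" using inner_bound[OF normK[OF y]] .
  ultimately show ?thesis by linarith
qed

lemma LR_lip1: "LR x p \<le> LR x' p' + R * norm (x - x') + R * norm (p - p')"
  unfolding LagL_def[of _ _ x p]
proof (rule cSUP_least[OF Kne])
  fix y assume y: "y \<in> K"
  have "inner y p' - Hr y x' \<le> LR x' p'" using LR_ge[OF y] .
  moreover have "\<bar>Hr y x - Hr y x'\<bar> \<le> R * norm (x - x')" using Hr_lip[of y x y x'] by simp
  moreover have "inner y p = inner y p' + inner y (p - p')" by (simp add: inner_diff_right)
  moreover have "\<bar>inner y (p - p')\<bar> \<le> R * norm (p - p')" using inner_bound[OF normK[OF y]] .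
  ultimately show "inner y p - Hr y x \<le> LR x' p' + R * norm (x - x') + R * norm (p - p')" by linarith
qed

lemma LR_lip: "\<bar>LR x p - LR x' p'\<bar> \<le> R * norm (x - x') + R * norm (p - p')"
proof (rule abs_leI)
  show "LR x p - LR x' p' \<le> R * norm (x - x') + R * norm (p - p')" using LR_lip1[of x p x' p'] by linarith
  have c: "LR x' p' \<le> LR x p + R * norm (x - x') + R * norm (p - p')" using LR_lip1[of x' p' x p] by (simp add: norm_minus_commute)
  show "- (LR x p - LR x' p') \<le> R * norm (x - x') + R * norm (p - p')" using c by linarith
qed

lemma LR_convex: "convex_on UNIV (\<lambda>(x,p). LR x p)"
proof (rule convex_onI)
  fix t and a b :: "'a \<times> 'a" assume t: "0 < (t::real)" "t < 1"
  obtain x1 p1 x2 p2 where ab: "a = (x1,p1)" "b = (x2,p2)" by (cases a, cases b) auto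
  have "LR ((1-t) *\<^sub>R x1 + t *\<^sub>R x2) ((1-t) *\<^sub>R p1 + t *\<^sub>R p2) \<le> (1-t) * LR x1 p1 + t * LR x2 p2"
    unfolding LagL_def[of _ _ "(1-t) *\<^sub>R x1 + t *\<^sub>R x2"]
  proof (rule cSUP_least[OF Kne])
    fix y assume y: "y \<in> K"
    have "concave_on UNIV (\<lambda>x. Hr y x)" by (rule Hr_concave)
    hence c: "Hr y ((1-t) *\<^sub>R x1 + t *\<^sub>R x2) \<ge> (1-t) * Hr y x1 + t * Hr y x2"
      using t by (intro concave_onD[of UNIV]) auto
    have a: "(1-t) * (inner y p1 - Hr y x1) \<le> (1-t) * LR x1 p1"
      using t LR_ge[OF y] by (intro mult_left_mono) auto
    have b: "t * (inner y p2 - Hr y x2) \<le> t * LR x2 p2"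
      using t LR_ge[OF y] by (intro mult_left_mono) auto
    have "inner y ((1-t) *\<^sub>R p1 + t *\<^sub>R p2) = (1-t) * inner y p1 + t * inner y p2"
      by (simp add: inner_add_right)
    thus "inner y ((1-t) *\<^sub>R p1 + t *\<^sub>R p2) - Hr y ((1-t) *\<^sub>R x1 + t *\<^sub>R x2) \<le> (1-t) * LR x1 p1 + t * LR x2 p2"
      using a b c by (simp add: algebra_simps)
  qed
  thus "(\<lambda>(x,p). LR x p) ((1-t) *\<^sub>R a + t *\<^sub>R b) \<le> (1-t) * (\<lambda>(x,p). LR x p) a + t * (\<lambda>(x,p). LR x p) b"
    using ab by simp
qed simp

lemma HL_le1: assumes "x\<in>K" "p\<in>B" shows "HL x y \<le> L x p - inner y p"
  unfolding HamB_def[of _ _ x y]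
proof (rule cSUP_least[OF Bne])
  fix q assume q: "q \<in> B"
  have "inner y p + inner q x - Ls p x \<le> Lss y q" using Lss_ge assms by blast
  moreover have "Ls p x \<le> L x p" using Ls_le_L assms by blast
  ultimately show "inner x q - Lss y q \<le> L x p - inner y p" by (simp add: inner_commute)
qed

lemma LR_le_L: assumes "x\<in>K" "p\<in>B" shows "LR x p \<le> L x p"
  unfolding LagL_def[of _ Hr]
proof (rule cSUP_least[OF Kne])
  fix y assume y: "y \<in> K"
  have "inner y p - Lss x p \<le> HL y x" using HL_ge assms by blast
  moreover have "Lss x p \<le> L x p" using Lss_le_L assms by blast
  moreover have "HL x y \<le> L x p - inner y p" using HL_le1 assms by blast
  ultimately have "HL x y - HL y x \<le> 2 * (L x p - inner y p)" by (smt (verit))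
  thus "inner y p - Hr y x \<le> L x p" unfolding Hr_def' by (simp add: field_simps)
qed

end

lemma lip_pair:
  fixes F :: "'a::real_normed_vector \<Rightarrow> 'b::real_normed_vector \<Rightarrow> real"
  assumes "C \<ge> 0" "\<And>x p x' p'. \<bar>F x p - F x' p'\<bar> \<le> C * norm (x - x') + C * norm (p - p')"
  shows "(2*C)-lipschitz_on UNIV (\<lambda>(x,p). F x p)"
proof (rule lipschitz_onI)
  fix a b :: "'a \<times> 'b"
  obtain x p x' p' where ab: "a = (x,p)" "b = (x',p')" by (cases a, cases b) auto
  have "C * dist x x' \<le> C * dist a b" using assms(1) dist_fst_le[of a b] ab by (intro mult_left_mono) auto
  moreover have "C * dist p p' \<le> C * dist a b" using assms(1) dist_snd_le[of a b] ab by (intro mult_left_mono) auto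
  moreover have "\<bar>F x p - F x' p'\<bar> \<le> C * dist x x' + C * dist p p'" using assms(2) by (simp add: dist_norm)
  ultimately show "dist ((\<lambda>(x,p). F x p) a) ((\<lambda>(x,p). F x p) b) \<le> 2 * C * dist a b"
    using ab by (simp add: dist_real_def)
qed (use assms in simp)


theorem proposition2p2:
  fixes Om :: "'a::euclidean_space set" and R :: real and H :: "'a \<Rightarrow> 'a \<Rightarrow> real"
  assumes "open Om" and "connected Om" and "Om \<noteq> {}" and "bounded Om"
    and "R > 0" and "closure Om \<subseteq> ball 0 R"
    and "classH Om H"
  shows
    "(\<forall>x y. Hreg Om R H x y = - Hreg Om R H y x) \<and>
     (\<forall>y. convex_on UNIV (\<lambda>x. Hreg Om R H x y)) \<and>
     (\<forall>x. concave_on UNIV (\<lambda>y. Hreg Om R H x y)) \<and>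
     classH Om (Hreg Om R H)
   \<and>
     convex_on UNIV (\<lambda>(x, p). LagL Om (Hreg Om R H) x p) \<and>
     continuous_on UNIV (\<lambda>(x, p). LagL Om (Hreg Om R H) x p) \<and>
     (\<forall>x\<in>closure Om. \<forall>p\<in>ball 0 R. LagL Om (Hreg Om R H) x p \<le> LagL Om H x p)
   \<and>
     (\<forall>x p. \<bar>LagL Om (Hreg Om R H) x p\<bar> \<le> R * norm x + R * norm p + 5 * R^2) \<and>
     (\<forall>x y. \<bar>Hreg Om R H x y\<bar> \<le> R * norm x + R * norm y + 4 * R^2)
   \<and>
     (\<exists>C \<le> 4 * real DIM('a) * R. C-lipschitz_on UNIV (\<lambda>(x, p). LagL Om (Hreg Om R H) x p)) \<and>
     (\<exists>C \<le> 4 * real DIM('a) * R. C-lipschitz_on UNIV (\<lambda>(x, y). Hreg Om R H x y))"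
proof -
  let ?K = "closure Om"
  have bK: "bounded ?K" using assms(6) bounded_subset bounded_ball by blast
  hence cK: "compact ?K" by (simp add: compact_eq_bounded_closed)
  have "continuous_on (?K \<times> ?K) (\<lambda>(x, y). H x y)" using assms(7) by (simp add: classH_def)
  hence "compact ((\<lambda>(x, y). H x y) ` (?K \<times> ?K))"
    using cK by (intro compact_continuous_image compact_Times) auto
  then obtain M where M: "\<forall>z\<in>(\<lambda>(x, y). H x y) ` (?K \<times> ?K). norm z \<le> M"
    using compact_imp_bounded bounded_iff by metis
  have Mb: "\<bar>H x y\<bar> \<le> M" if "x \<in> ?K" "y \<in> ?K" for x y using M that by force
  have Kne: "?K \<noteq> {}" using assms(3) by simp
  interpret reg Om R H M using assms(5,6,7) Kne Mb by unfold_locales auto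
  have R0: "0 \<le> R" using assms(5) by simp
  have RR2: "R * R \<le> 4 * R^2" "R * R \<le> 5 * R^2" using R0 by (auto simp: power2_eq_square)
  have D: "2 * R \<le> 4 * real DIM('a) * R"
  proof -
    have "1 \<le> real DIM('a)" using DIM_positive[where 'a='a] by linarith
    hence "1 \<le> 2 * real DIM('a)" by linarith
    hence "2 * R * 1 \<le> 2 * R * (2 * real DIM('a))" using R0 by (intro mult_left_mono) auto
    thus ?thesis by simp
  qed
  have lipH: "(2*R)-lipschitz_on UNIV (\<lambda>(x, y). Hr x y)"
    by (rule lip_pair) (use R0 Hr_lip in auto)
  have lipL: "(2*R)-lipschitz_on UNIV (\<lambda>(x, p). LR x p)"
    by (rule lip_pair) (use R0 LR_lip in auto)
  have contH: "continuous_on UNIV (\<lambda>(x, y). Hr x y)" by (rule lipschitz_on_continuous_on[OF lipH])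
  have contL: "continuous_on UNIV (\<lambda>(x, p). LR x p)" by (rule lipschitz_on_continuous_on[OF lipL])
  have cl: "classH Om Hr"
    unfolding classH_def
  proof (intro conjI ballI)
    show "continuous_on (closure Om \<times> closure Om) (\<lambda>(x, y). Hr x y)"
      using continuous_on_subset[OF contH] by blast
  next
    fix x y show "Hr x y = - Hr y x" by (rule Hr_anti)
  qed
  have bL: "\<bar>LR x p\<bar> \<le> R * norm x + R * norm p + 5 * R^2" for x p
    using LR_upper[of x p] LR_lower[of p x] RR2 by linarith
  have bH: "\<bar>Hr x y\<bar> \<le> R * norm x + R * norm y + 4 * R^2" for x y
    using Hr_bound[of x y] RR2 R0 by (smt (verit) zero_le_power2)
  show ?thesis
    using Hr_anti Hr_convex Hr_concave cl LR_convex contL LR_le_L bL bH lipL lipH D by blast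
qed

end
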